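(* Let $\Lambda$ be a hypergraph on a finite vertex set $V$ (given as a map $\Lambda:\mathcal{P}(V)\to\mathbb{Z}^+$, $\Lambda(A)$ being the number of hyperedges over $A$), and let $A\subseteq V$. Then $A$ is essential for $\Lambda$ if and only if $\Lambda(A)=1$ and $|A\setminus V^*(\Lambda\mathbb{1}_{\{A\}^C})|=1$.
   Context: $\Lambda\mathbb{1}_{\{A\}^C}$ denotes the hypergraph obtained from $\Lambda$ by removing all hyperedges over the set $A$ (i.e. setting the multiplicity of $A$ to $0$). Hyperedges over singleton sets are called patches. Identifiable vertices: repeatedly pick a vertex carrying a patch, delete that vertex and the patch, and collapse every other hyperedge containing it onto its remaining vertices; continue until no patches remain. The set of removed vertices does not depend on the order of choices and is denoted $V^*(\Lambda)$. A set $A\subseteq V$ is called essential for $\Lambda$ if $\Lambda(A)=1$ and $V^*(\Lambda\mathbb{1}_{\{A\}^C})\neq V^*(\Lambda)$. *)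

theory Defs
  imports Main
begin

text \<open>A state of the peeling process is the set S of vertices removed so far;
  the current (collapsed) hypergraph has, for every original hyperedge B,
  the hyperedge B - S. A patch in the current hypergraph is a hyperedge
  whose current vertex set is a singleton.\<close>

definition hypergraph :: "'a set \<Rightarrow> ('a set \<Rightarrow> nat) \<Rightarrow> bool" where
  "hypergraph V \<Lambda> \<longleftrightarrow> finite V \<and> (\<forall>B. 0 < \<Lambda> B \<longrightarrow> B \<subseteq> V)"

definition carries_patch :: "('a set \<Rightarrow> nat) \<Rightarrow> 'a set \<Rightarrow> 'a \<Rightarrow> bool" where
  "carries_patch \<Lambda> S v \<longleftrightarrow> (\<exists>B. 0 < \<Lambda> B \<and> B - S = {v})"

definition peel_step :: "('a set \<Rightarrow> nat) \<Rightarrow> 'a set \<Rightarrow> 'a set \<Rightarrow> bool" where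
  "peel_step \<Lambda> S S' \<longleftrightarrow> (\<exists>v. carries_patch \<Lambda> S v \<and> S' = insert v S)"

definition peel_terminal :: "('a set \<Rightarrow> nat) \<Rightarrow> 'a set \<Rightarrow> bool" where
  "peel_terminal \<Lambda> S \<longleftrightarrow> \<not> (\<exists>v. carries_patch \<Lambda> S v)"

text \<open>V*(Lambda): the set of removed vertices when the process stops
  (well defined by the order independence of the process).\<close>
definition Vstar :: "('a set \<Rightarrow> nat) \<Rightarrow> 'a set" where
  "Vstar \<Lambda> = (THE S. (peel_step \<Lambda>)\<^sup>*\<^sup>* {} S \<and> peel_terminal \<Lambda> S)"

definition essential :: "('a set \<Rightarrow> nat) \<Rightarrow> 'a set \<Rightarrow> bool" where
  "essential \<Lambda> A \<longleftrightarrow> \<Lambda> A = 1 \<and> Vstar (\<Lambda>(A := 0)) \<noteq> Vstar \<Lambda>"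

end

theory Submission
  imports Defs
begin

lemma reach_sub:
  assumes "(peel_step L)\<^sup>*\<^sup>* S0 S" "S0 \<subseteq> T" "peel_terminal L T"
  shows "S \<subseteq> T"
  using assms(1)
proof (induction rule: rtranclp_induct)
  case base then show ?case using assms(2) by simp
next
  case (step y z)
  then obtain v B where vB: "0 < L B" "B - y = {v}" "z = insert v y"
    unfolding peel_step_def carries_patch_def by blast
  show ?case
  proof (rule ccontr)
    assume "\<not> z \<subseteq> T"
    then have "v \<notin> T" using vB step.IH by auto
    then have "B - T = {v}" using vB step.IH by blast
    then show False using assms(3) vB unfolding peel_terminal_def carries_patch_def by blast
  qed
qed

lemma reach_V:
  assumes "hypergraph V L" "(peel_step L)\<^sup>*\<^sup>* {} S"
  shows "S \<subseteq> V"
  using assms(2)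
proof (induction rule: rtranclp_induct)
  case base then show ?case by simp
next
  case (step y z)
  then obtain v B where vB: "0 < L B" "B - y = {v}" "z = insert v y"
    unfolding peel_step_def carries_patch_def by blast
  then have "B \<subseteq> V" using assms(1) unfolding hypergraph_def by blast
  then show ?case using vB step.IH by blast
qed

lemma reach_exists:
  assumes "hypergraph V L"
  shows "\<exists>S. (peel_step L)\<^sup>*\<^sup>* {} S \<and> peel_terminal L S"
proof -
  let ?R = "{S. (peel_step L)\<^sup>*\<^sup>* {} S}"
  have fin: "finite ?R"
  proof (rule finite_subset)
    show "?R \<subseteq> Pow V" using reach_V[OF assms] by blast
    show "finite (Pow V)" using assms unfolding hypergraph_def by simp
  qed
  have ne: "?R \<noteq> {}" by auto
  obtain m where m: "m \<in> ?R" "\<forall>b\<in>?R. m \<le> b \<longrightarrow> m = b"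
    using finite_has_maximal[OF fin ne] by blast
  have "peel_terminal L m"
    unfolding peel_terminal_def
  proof
    assume "\<exists>v. carries_patch L m v"
    then obtain v B where vB: "0 < L B" "B - m = {v}"
      unfolding carries_patch_def by blast
    have "peel_step L m (insert v m)"
      unfolding peel_step_def carries_patch_def using vB by blast
    then have "insert v m \<in> ?R" using m(1) by auto
    then have "m = insert v m" using m(2) by blast
    then show False using vB by blast
  qed
  then show ?thesis using m(1) by blast
qed

lemma Vstar_char:
  assumes "hypergraph V L"
  shows "(peel_step L)\<^sup>*\<^sup>* {} (Vstar L) \<and> peel_terminal L (Vstar L)"
    and "\<And>T. peel_terminal L T \<Longrightarrow> Vstar L \<subseteq> T"
proof -
  obtain S where S: "(peel_step L)\<^sup>*\<^sup>* {} S" "peel_terminal L S"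
    using reach_exists[OF assms] by blast
  have uniq: "\<And>S'. (peel_step L)\<^sup>*\<^sup>* {} S' \<and> peel_terminal L S' \<Longrightarrow> S' = S"
  proof -
    fix S' assume h: "(peel_step L)\<^sup>*\<^sup>* {} S' \<and> peel_terminal L S'"
    have "S' \<subseteq> S" using reach_sub[of L "{}" S' S] h S by blast
    moreover have "S \<subseteq> S'" using reach_sub[of L "{}" S S'] h S by blast
    ultimately show "S' = S" by blast
  qed
  have eq: "Vstar L = S"
    unfolding Vstar_def
  proof (rule the_equality)
    show "(peel_step L)\<^sup>*\<^sup>* {} S \<and> peel_terminal L S" using S by (rule conjI)
  next
    fix S' assume "(peel_step L)\<^sup>*\<^sup>* {} S' \<and> peel_terminal L S'"
    then show "S' = S" by (rule uniq)
  qed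
  show "(peel_step L)\<^sup>*\<^sup>* {} (Vstar L) \<and> peel_terminal L (Vstar L)" unfolding eq using S by (rule conjI)
  fix T assume t: "peel_terminal L T"
  have "S \<subseteq> T" by (rule reach_sub[OF S(1) _ t]) simp
  then show "Vstar L \<subseteq> T" unfolding eq .
qed

lemma reach_mono:
  assumes "(peel_step (L(A := 0)))\<^sup>*\<^sup>* S0 S"
  shows "(peel_step L)\<^sup>*\<^sup>* S0 S"
  using assms
proof (induction rule: rtranclp_induct)
  case base then show ?case by simp
next
  case (step y z)
  have "peel_step L y z" using step(2)
    unfolding peel_step_def carries_patch_def by (auto split: if_splits)
  then show ?case using step.IH by simp
qed

theorem proposition4:
  fixes V :: "'a set" and \<Lambda> :: "'a set \<Rightarrow> nat" and A :: "'a set"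
  assumes "hypergraph V \<Lambda>" and "A \<subseteq> V"
  shows "essential \<Lambda> A \<longleftrightarrow> \<Lambda> A = 1 \<and> card (A - Vstar (\<Lambda>(A := 0))) = 1"
proof -
  let ?L = "\<Lambda>(A := 0)"
  have h': "hypergraph V ?L" using assms(1) unfolding hypergraph_def by (simp split: if_split)
  note C = Vstar_char[OF assms(1)]
  note C' = Vstar_char[OF h']
  have r: "(peel_step \<Lambda>)\<^sup>*\<^sup>* {} (Vstar ?L)"
    by (rule reach_mono[of _ A]) (use C'(1) in simp)
  have tL: "peel_terminal \<Lambda> (Vstar \<Lambda>)" using C(1) by simp
  have tL': "peel_terminal ?L (Vstar ?L)" using C'(1) by simp
  have sub: "Vstar ?L \<subseteq> Vstar \<Lambda>"
    by (rule reach_sub[OF r _ tL]) simp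
  have key: "\<Lambda> A = 1 \<Longrightarrow> Vstar ?L \<noteq> Vstar \<Lambda> \<longleftrightarrow> card (A - Vstar ?L) = 1"
  proof
    assume a1: "\<Lambda> A = 1" and ne: "Vstar ?L \<noteq> Vstar \<Lambda>"
    show "card (A - Vstar ?L) = 1"
    proof (rule ccontr)
      assume nc: "card (A - Vstar ?L) \<noteq> 1"
      have "peel_terminal \<Lambda> (Vstar ?L)"
        unfolding peel_terminal_def carries_patch_def
      proof
        assume "\<exists>v B. 0 < \<Lambda> B \<and> B - Vstar ?L = {v}"
        then obtain v B where vB: "0 < \<Lambda> B" "B - Vstar ?L = {v}" by blast
        show False
        proof (cases "B = A")
          case True then show False using vB nc by simp
        next
          case False
          then have "0 < ?L B" using vB by simp
          then have "carries_patch ?L (Vstar ?L) v"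
            unfolding carries_patch_def using vB(2) by blast
          then show False using tL' unfolding peel_terminal_def by blast
        qed
      qed
      then have "Vstar \<Lambda> \<subseteq> Vstar ?L" using C(2) by blast
      then show False using sub ne by blast
    qed
  next
    assume a1: "\<Lambda> A = 1" and c: "card (A - Vstar ?L) = 1"
    have "\<exists>v. A - Vstar ?L = {v}" using c card_1_singleton_iff[of "A - Vstar ?L"] by simp
    then obtain v where v: "A - Vstar ?L = {v}" by blast
    show "Vstar ?L \<noteq> Vstar \<Lambda>"
    proof
      assume eq: "Vstar ?L = Vstar \<Lambda>"
      have "carries_patch \<Lambda> (Vstar \<Lambda>) v"
        unfolding carries_patch_def using v eq a1 by (intro exI[of _ A]) simp
      then show False using tL unfolding peel_terminal_def by blast
    qed
  qed
  show ?thesis unfolding essential_def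
  proof
    assume "\<Lambda> A = 1 \<and> Vstar ?L \<noteq> Vstar \<Lambda>"
    then show "\<Lambda> A = 1 \<and> card (A - Vstar ?L) = 1" using key by blast
  next
    assume "\<Lambda> A = 1 \<and> card (A - Vstar ?L) = 1"
    then show "\<Lambda> A = 1 \<and> Vstar ?L \<noteq> Vstar \<Lambda>" using key by blast
  qed
qed

end
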